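(* Let $(X,S)$ be the periodic Tri-tris transformation semigroup on the $3\times 4$ board (width $3$, height $4$) with piece set $P=\{\mathrm{RS},\mathrm{LUS},\mathrm{RUS},\mathrm{V}\}$. There is a $5$-element set $Z\subseteq X$ of game states, containing the empty board $e$, and there are elements $g_1,g_2\in S$ such that $Z\cdot g_1=Z$ and $Z\cdot g_2=Z$. The restriction of $g_1$ to $Z$ is a $5$-cycle. The restriction of $g_2$ to $Z$ is a product of a disjoint $3$-cycle (containing $e$) and a transposition. Consequently, the permutations of $Z$ induced by elements of $S$ that map $Z$ onto itself form the full symmetric group $S_5$ on $Z$. In particular, this group contains the alternating group $A_5$, a finite simple nonabelian group.
   Context: Board: a grid of $n=3$ columns, indexed $0,1,2$, and $k=4$ rows. A game state is a subset of filled cells of this grid. Pieces are sets of connected cells. - $\mathrm{V}$ is the vertical straight triomino: three cells stacked in one column. - The other pieces are orientations of the L-shaped triomino, i.e. a $2\times 2$ square with one cell removed. - $\mathrm{RS}$ has two cells in its bottom row and one cell above the right one. - $\mathrm{LUS}$ has two cells in its top row and one cell below the left one. - $\mathrm{RUS}$ has two cells in its top row and one cell below the right one. - (The fourth orientation, $\mathrm{LS}$, has one cell above the left bottom cell; it is not used here.) Basic events: a basic event is a pair $\sigma=(p,\xi)$ with $p\in P$ and $\xi$ a column index such that the piece fits horizontally when its leftmost cells are placed in column $\xi$. The state $x\cdot\sigma$ is obtained as follows. 1. Drop $p$ vertically, without rotation or sliding, with its leftmost cells in column $\xi$, from above the board until it rests on the floor or on filled cells. 2. Repeatedly remove any completely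 filled row, moving all cells above it down one row. 3. If the piece cannot be placed entirely within the $k$ rows, the result is the game-over outcome. In the periodic variant, the game-over outcome is replaced by the empty board $e$, so $x\cdot\sigma=e$. $X$ is the set of states reachable from $e$ by finite sequences of basic events. $S$ is the transformation semigroup on $X$ generated by the basic events, with product $\sigma_1\sigma_2$ meaning apply $\sigma_1$ first and then $\sigma_2$. *)

theory Defs
  imports "HOL-Combinatorics.Permutations"
begin

text \<open>Tri-tris on a board with n columns (0..n-1) and k rows (0..k-1, row 0 is the
  bottom).  A cell is a pair (column, row); a game state is a set of filled cells.\<close>

type_synonym cell = "nat \<times> nat"
type_synonym state = "cell set"

datatype piece = RS | LUS | RUS | LS | V

text \<open>Cells of each piece, as offsets (dx, dy) from its bottom-left corner
  (dx = column offset, dy = row offset upwards).\<close>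
fun piece_cells :: "piece \<Rightarrow> cell set" where
  "piece_cells V   = {(0,0), (0,1), (0,2)}"
| "piece_cells RS  = {(0,0), (1,0), (1,1)}"
| "piece_cells LS  = {(0,0), (1,0), (0,1)}"
| "piece_cells LUS = {(0,1), (1,1), (0,0)}"
| "piece_cells RUS = {(0,1), (1,1), (1,0)}"

definition fits :: "nat \<Rightarrow> piece \<Rightarrow> nat \<Rightarrow> bool" where
  "fits n p xi \<longleftrightarrow> (\<forall>(dx,dy)\<in>piece_cells p. xi + dx < n)"

definition placed_at :: "piece \<Rightarrow> nat \<Rightarrow> nat \<Rightarrow> state" where
  "placed_at p xi h = {(xi + dx, h + dy) | dx dy. (dx, dy) \<in> piece_cells p}"

definition collides :: "state \<Rightarrow> piece \<Rightarrow> nat \<Rightarrow> nat \<Rightarrow> bool" where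
  "collides s p xi h \<longleftrightarrow> placed_at p xi h \<inter> s \<noteq> {}"

text \<open>Dropping from above: the piece passes through all heights h' >= h without
  collision and rests at the least such height h (on the floor or on filled cells).\<close>
definition land_height :: "state \<Rightarrow> piece \<Rightarrow> nat \<Rightarrow> nat" where
  "land_height s p xi = (LEAST h. \<forall>h'\<ge>h. \<not> collides s p xi h')"

definition full_row :: "nat \<Rightarrow> state \<Rightarrow> nat \<Rightarrow> bool" where
  "full_row n s r \<longleftrightarrow> (\<forall>c<n. (c, r) \<in> s)"

definition clear_rows :: "nat \<Rightarrow> state \<Rightarrow> state" where
  "clear_rows n s = {(c, r - card {r'. r' < r \<and> full_row n s r'}) | c r.
                        (c, r) \<in> s \<and> \<not> full_row n s r}"

text \<open>Periodic variant: the game-over outcome is replaced by the empty board.\<close>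
definition act :: "nat \<Rightarrow> nat \<Rightarrow> state \<Rightarrow> piece \<times> nat \<Rightarrow> state" where
  "act n k s \<sigma> = (case \<sigma> of (p, xi) \<Rightarrow>
     (let t = clear_rows n (s \<union> placed_at p xi (land_height s p xi))
      in if (\<forall>(c, r)\<in>t. r < k) then t else {}))"

definition basic_events :: "nat \<Rightarrow> piece set \<Rightarrow> (piece \<times> nat) set" where
  "basic_events n P = {(p, xi). p \<in> P \<and> fits n p xi}"

inductive_set reachable :: "nat \<Rightarrow> nat \<Rightarrow> piece set \<Rightarrow> state set"
  for n k P where
  empty: "{} \<in> reachable n k P"
| step: "s \<in> reachable n k P \<Longrightarrow> \<sigma> \<in> basic_events n P \<Longrightarrow> act n k s \<sigma> \<in> reachable n k P"

text \<open>The transformation semigroup generated by the basic events; the product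
  f g means "apply f first, then g", so words are applied left to right.\<close>
inductive_set tsemigroup :: "nat \<Rightarrow> nat \<Rightarrow> piece set \<Rightarrow> (state \<Rightarrow> state) set"
  for n k P where
  gen: "\<sigma> \<in> basic_events n P \<Longrightarrow> (\<lambda>s. act n k s \<sigma>) \<in> tsemigroup n k P"
| app: "f \<in> tsemigroup n k P \<Longrightarrow> \<sigma> \<in> basic_events n P \<Longrightarrow> (\<lambda>s. act n k (f s) \<sigma>) \<in> tsemigroup n k P"

abbreviation "P0 \<equiv> {RS, LUS, RUS, V}"
abbreviation "X0 \<equiv> reachable 3 4 P0"
abbreviation "S0 \<equiv> tsemigroup 3 4 P0"

definition induced :: "state set \<Rightarrow> (state \<Rightarrow> state) \<Rightarrow> state \<Rightarrow> state" where
  "induced Z g = (\<lambda>z. if z \<in> Z then g z else z)"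

end

theory Submission
  imports Defs
begin

fun lh :: "state \<Rightarrow> piece \<Rightarrow> nat \<Rightarrow> nat \<Rightarrow> nat" where
  "lh s p xi 0 = 0"
| "lh s p xi (Suc h) = (if collides s p xi h then Suc h else lh s p xi h)"

definition full3 :: "state \<Rightarrow> nat \<Rightarrow> bool" where
  "full3 t r \<longleftrightarrow> (0,r) \<in> t \<and> (1,r) \<in> t \<and> (2,r) \<in> t"

definition clr :: "state \<Rightarrow> state" where
  "clr t = (\<lambda>(c,r). (c, r - length (filter (full3 t) [0..<r]))) ` Set.filter (\<lambda>(c,r). \<not> full3 t r) t"

definition plc :: "piece \<Rightarrow> nat \<Rightarrow> nat \<Rightarrow> state" where
  "plc p xi h = (\<lambda>(dx,dy). (xi+dx, h+dy)) ` piece_cells p"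

definition actx :: "state \<Rightarrow> piece \<times> nat \<Rightarrow> state" where
  "actx s \<sigma> = (case \<sigma> of (p, xi) \<Rightarrow>
     (let t = clr (s \<union> plc p xi (lh s p xi 4)) in if (\<forall>(c, r)\<in>t. r < 4) then t else {}))"

definition runx :: "(piece \<times> nat) list \<Rightarrow> state \<Rightarrow> state" where
  "runx w s = fold (\<lambda>\<sigma> s. actx s \<sigma>) w s"

definition run :: "(piece \<times> nat) list \<Rightarrow> state \<Rightarrow> state" where
  "run w s = fold (\<lambda>\<sigma> s. act 3 4 s \<sigma>) w s"

lemma lh_correct:
  "(\<forall>h'\<ge>h. \<not> collides s p xi h') \<Longrightarrow> land_height s p xi = lh s p xi h"
proof (induction h)
  case 0
  then show ?case unfolding land_height_def by (simp add: Least_eq_0)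
next
  case (Suc h)
  show ?case
  proof (cases "collides s p xi h")
    case True
    have "(LEAST h. \<forall>h'\<ge>h. \<not> collides s p xi h') = Suc h"
    proof (rule Least_equality)
      show "\<forall>h'\<ge>Suc h. \<not> collides s p xi h'" using Suc.prems by blast
      fix y assume "\<forall>h'\<ge>y. \<not> collides s p xi h'"
      with True show "Suc h \<le> y" by (metis not_less_eq_eq)
    qed
    then show ?thesis using True by (simp add: land_height_def)
  next
    case False
    then have "\<forall>h'\<ge>h. \<not> collides s p xi h'" using Suc.prems
      by (metis le_antisym not_less_eq_eq)
    then show ?thesis using Suc.IH False by simp
  qed
qed

lemma placed_plc: "placed_at p xi h = plc p xi h"
  unfolding placed_at_def plc_def by auto

lemma high_nocoll:
  assumes "\<forall>(c,r)\<in>s. r < 4"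
  shows "\<forall>h'\<ge>4. \<not> collides s p xi h'"
  using assms unfolding collides_def placed_at_def by fastforce

lemma full_row3: "full_row 3 t r = full3 t r"
  unfolding full_row_def full3_def
proof
  assume "\<forall>c<3. (c, r) \<in> t" then show "(0,r) \<in> t \<and> (1,r) \<in> t \<and> (2,r) \<in> t" by simp
next
  assume "(0,r) \<in> t \<and> (1,r) \<in> t \<and> (2,r) \<in> t"
  then show "\<forall>c<3. (c, r) \<in> t" by (auto simp: numeral_3_eq_3 less_Suc_eq numeral_2_eq_2)
qed

lemma card_filter_len: "card {r'. r' < r \<and> P r'} = length (filter P [0..<r])"
proof -
  have "set (filter P [0..<r]) = {r'. r' < r \<and> P r'}" by auto
  then show ?thesis by (metis distinct_card distinct_filter distinct_upt)
qed

lemma clear_clr: "clear_rows 3 t = clr t"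
  unfolding clear_rows_def clr_def full_row3 card_filter_len by force

lemma act_actx:
  assumes "\<forall>(c,r)\<in>s. r < 4"
  shows "act 3 4 s \<sigma> = actx s \<sigma>"
proof -
  obtain p xi where s: "\<sigma> = (p, xi)" by force
  show ?thesis
    unfolding s act_def actx_def clear_clr placed_plc
    using lh_correct[OF high_nocoll[OF assms]] by simp
qed

lemma act_rows: "\<forall>(c,r)\<in>act 3 4 s \<sigma>. r < 4"
  unfolding act_def by (auto simp: Let_def split: prod.splits)

lemma run_runx: "\<forall>(c,r)\<in>s. r < 4 \<Longrightarrow> run w s = runx w s"
proof (induction w arbitrary: s)
  case Nil
  then show ?case by (simp add: run_def runx_def)
next
  case (Cons a w)
  have "run (a # w) s = run w (act 3 4 s a)" by (simp add: run_def)
  also have "\<dots> = runx w (act 3 4 s a)" using Cons.IH act_rows by blast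
  also have "\<dots> = runx (a # w) s" using act_actx[OF Cons.prems] by (simp add: runx_def)
  finally show ?case .
qed

lemma run_append: "run (v @ w) s = run w (run v s)"
  by (simp add: run_def)

lemma run_S0: "w \<noteq> [] \<Longrightarrow> set w \<subseteq> basic_events 3 P0 \<Longrightarrow> run w \<in> S0"
proof (induction w rule: rev_induct)
  case Nil
  then show ?case by simp
next
  case (snoc x xs)
  show ?case
  proof (cases "xs = []")
    case True
    have "run (xs @ [x]) = (\<lambda>s. act 3 4 s x)" using True by (simp add: run_def fun_eq_iff)
    then show ?thesis using snoc.prems by (auto intro: tsemigroup.gen)
  next
    case False
    have "run (xs @ [x]) = (\<lambda>s. act 3 4 (run xs s) x)" by (simp add: run_def fun_eq_iff)
    then show ?thesis using snoc False by (auto intro: tsemigroup.app)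
  qed
qed

lemma run_X0: "s \<in> X0 \<Longrightarrow> set w \<subseteq> basic_events 3 P0 \<Longrightarrow> run w s \<in> X0"
proof (induction w arbitrary: s)
  case Nil
  then show ?case by (simp add: run_def)
next
  case (Cons a w)
  have "act 3 4 s a \<in> X0" using Cons.prems by (auto intro: reachable.step)
  then show ?case using Cons by (simp add: run_def)
qed

definition "G1 = [(RS,1),(V,0),(RS,1),(RUS,0),(V,2),(V,0)]"
definition "G2 = [(RS,1),(LUS,1),(LUS,0),(V,2),(V,0)]"

definition "z0 = ({} :: state)"
definition "z1 = ({(0, 0), (0, 1), (0, 2), (2, 0), (2, 1), (2, 2)} :: state)"
definition "z2 = ({(0, 0), (0, 1), (0, 2), (0, 3), (2, 0), (2, 1)} :: state)"
definition "z3 = ({(0, 0), (2, 0), (2, 1)} :: state)"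
definition "z4 = ({(0, 0), (0, 1), (2, 0)} :: state)"
definition "ZZ = {z0, z1, z2, z3, z4}"

lemma ev_G12: "set G1 \<subseteq> basic_events 3 P0" "set G2 \<subseteq> basic_events 3 P0" "G1 \<noteq> []" "G2 \<noteq> []"
  unfolding G1_def G2_def basic_events_def fits_def by auto

lemma zrows: "\<forall>(c,r)\<in>z0. r < 4" "\<forall>(c,r)\<in>z1. r < 4" "\<forall>(c,r)\<in>z2. r < 4"
  "\<forall>(c,r)\<in>z3. r < 4" "\<forall>(c,r)\<in>z4. r < 4"
  unfolding z0_def z1_def z2_def z3_def z4_def by auto

lemma g1_0: "run G1 z0 = z1"
  unfolding run_runx[OF zrows(1)] unfolding G1_def z0_def z1_def by code_simp
lemma g1_1: "run G1 z1 = z2"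
  unfolding run_runx[OF zrows(2)] unfolding G1_def z1_def z2_def by code_simp
lemma g1_2: "run G1 z2 = z3"
  unfolding run_runx[OF zrows(3)] unfolding G1_def z2_def z3_def by code_simp
lemma g1_3: "run G1 z3 = z4"
  unfolding run_runx[OF zrows(4)] unfolding G1_def z3_def z4_def by code_simp
lemma g1_4: "run G1 z4 = z0"
  unfolding run_runx[OF zrows(5)] unfolding G1_def z4_def z0_def by code_simp
lemma g2_0: "run G2 z0 = z3"
  unfolding run_runx[OF zrows(1)] unfolding G2_def z0_def z3_def by code_simp
lemma g2_1: "run G2 z1 = z4"
  unfolding run_runx[OF zrows(2)] unfolding G2_def z1_def z4_def by code_simp
lemma g2_2: "run G2 z2 = z0"
  unfolding run_runx[OF zrows(3)] unfolding G2_def z2_def z0_def by code_simp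
lemma g2_3: "run G2 z3 = z2"
  unfolding run_runx[OF zrows(4)] unfolding G2_def z3_def z2_def by code_simp
lemma g2_4: "run G2 z4 = z1"
  unfolding run_runx[OF zrows(5)] unfolding G2_def z4_def z1_def by code_simp

lemmas zimg_simps = g1_0 g1_1 g1_2 g1_3 g1_4 g2_0 g2_1 g2_2 g2_3 g2_4 run_append

lemma zdist: "z0 \<noteq> z1" "z0 \<noteq> z2" "z0 \<noteq> z3" "z0 \<noteq> z4" "z1 \<noteq> z2" "z1 \<noteq> z3"
  "z1 \<noteq> z4" "z2 \<noteq> z3" "z2 \<noteq> z4" "z3 \<noteq> z4"
  unfolding z0_def z1_def z2_def z3_def z4_def by code_simp+

lemmas zdist' = zdist zdist[symmetric]

definition good :: "(piece \<times> nat) list \<Rightarrow> bool" where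
  "good w \<longleftrightarrow> w \<noteq> [] \<and> set w \<subseteq> basic_events 3 P0 \<and> run w ` ZZ = ZZ"

lemma induced_comp: "g ` Z \<subseteq> Z \<Longrightarrow> induced Z (h \<circ> g) = induced Z h \<circ> induced Z g"
  unfolding induced_def by (auto simp: fun_eq_iff)

lemma good_append: "good v \<Longrightarrow> good w \<Longrightarrow> good (v @ w)"
  unfolding good_def by (auto simp: run_append image_image[symmetric])

lemma run_append_fun: "run (v @ w) = run w \<circ> run v"
  by (simp add: fun_eq_iff run_append)

lemma tr_sym: "\<exists>w. good w \<and> induced ZZ (run w) = Transposition.transpose a b \<Longrightarrow>
  \<exists>w. good w \<and> induced ZZ (run w) = Transposition.transpose b a"
  by (simp add: transpose_commute)

lemma id_word: "\<exists>w. good w \<and> induced ZZ (run w) = id"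
proof -
  let ?w = "G1@G1@G1@G1@G1"
  have "good ?w" using ev_G12 unfolding good_def by (auto simp: zimg_simps ZZ_def)
  moreover have "induced ZZ (run ?w) = id"
    by (auto simp: fun_eq_iff induced_def ZZ_def zimg_simps)
  ultimately show ?thesis by blast
qed

lemma tr_0_1: "\<exists>w. good w \<and> induced ZZ (run w) = Transposition.transpose z0 z1"
proof -
  let ?w = "G1@G1@G1@G2@G1@G1@G1@G1"
  have "good ?w" using ev_G12 unfolding good_def by (auto simp: zimg_simps ZZ_def)
  moreover have "induced ZZ (run ?w) = Transposition.transpose z0 z1"
    by (auto simp: fun_eq_iff induced_def Transposition.transpose_def ZZ_def zimg_simps zdist)
  ultimately show ?thesis by blast
qed

lemma tr_0_2: "\<exists>w. good w \<and> induced ZZ (run w) = Transposition.transpose z0 z2"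
proof -
  let ?w = "G1@G2@G1@G2@G2"
  have "good ?w" using ev_G12 unfolding good_def by (auto simp: zimg_simps ZZ_def)
  moreover have "induced ZZ (run ?w) = Transposition.transpose z0 z2"
    by (auto simp: fun_eq_iff induced_def Transposition.transpose_def ZZ_def zimg_simps zdist)
  ultimately show ?thesis by blast
qed

lemma tr_0_3: "\<exists>w. good w \<and> induced ZZ (run w) = Transposition.transpose z0 z3"
proof -
  let ?w = "G2@G2@G1@G2@G1"
  have "good ?w" using ev_G12 unfolding good_def by (auto simp: zimg_simps ZZ_def)
  moreover have "induced ZZ (run ?w) = Transposition.transpose z0 z3"
    by (auto simp: fun_eq_iff induced_def Transposition.transpose_def ZZ_def zimg_simps zdist)
  ultimately show ?thesis by blast
qed

lemma tr_0_4: "\<exists>w. good w \<and> induced ZZ (run w) = Transposition.transpose z0 z4"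
proof -
  let ?w = "G1@G1@G1@G1@G2@G1@G1@G1"
  have "good ?w" using ev_G12 unfolding good_def by (auto simp: zimg_simps ZZ_def)
  moreover have "induced ZZ (run ?w) = Transposition.transpose z0 z4"
    by (auto simp: fun_eq_iff induced_def Transposition.transpose_def ZZ_def zimg_simps zdist)
  ultimately show ?thesis by blast
qed

lemma tr_1_2: "\<exists>w. good w \<and> induced ZZ (run w) = Transposition.transpose z1 z2"
proof -
  let ?w = "G1@G1@G2"
  have "good ?w" using ev_G12 unfolding good_def by (auto simp: zimg_simps ZZ_def)
  moreover have "induced ZZ (run ?w) = Transposition.transpose z1 z2"
    by (auto simp: fun_eq_iff induced_def Transposition.transpose_def ZZ_def zimg_simps zdist)
  ultimately show ?thesis by blast
qed

lemma tr_1_3: "\<exists>w. good w \<and> induced ZZ (run w) = Transposition.transpose z1 z3"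
proof -
  let ?w = "G2@G1@G2@G2@G1"
  have "good ?w" using ev_G12 unfolding good_def by (auto simp: zimg_simps ZZ_def)
  moreover have "induced ZZ (run ?w) = Transposition.transpose z1 z3"
    by (auto simp: fun_eq_iff induced_def Transposition.transpose_def ZZ_def zimg_simps zdist)
  ultimately show ?thesis by blast
qed

lemma tr_1_4: "\<exists>w. good w \<and> induced ZZ (run w) = Transposition.transpose z1 z4"
proof -
  let ?w = "G2@G2@G2"
  have "good ?w" using ev_G12 unfolding good_def by (auto simp: zimg_simps ZZ_def)
  moreover have "induced ZZ (run ?w) = Transposition.transpose z1 z4"
    by (auto simp: fun_eq_iff induced_def Transposition.transpose_def ZZ_def zimg_simps zdist)
  ultimately show ?thesis by blast
qed

lemma tr_2_3: "\<exists>w. good w \<and> induced ZZ (run w) = Transposition.transpose z2 z3"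
proof -
  let ?w = "G1@G2@G1"
  have "good ?w" using ev_G12 unfolding good_def by (auto simp: zimg_simps ZZ_def)
  moreover have "induced ZZ (run ?w) = Transposition.transpose z2 z3"
    by (auto simp: fun_eq_iff induced_def Transposition.transpose_def ZZ_def zimg_simps zdist)
  ultimately show ?thesis by blast
qed

lemma tr_2_4: "\<exists>w. good w \<and> induced ZZ (run w) = Transposition.transpose z2 z4"
proof -
  let ?w = "G1@G2@G2@G1@G2"
  have "good ?w" using ev_G12 unfolding good_def by (auto simp: zimg_simps ZZ_def)
  moreover have "induced ZZ (run ?w) = Transposition.transpose z2 z4"
    by (auto simp: fun_eq_iff induced_def Transposition.transpose_def ZZ_def zimg_simps zdist)
  ultimately show ?thesis by blast
qed

lemma tr_3_4: "\<exists>w. good w \<and> induced ZZ (run w) = Transposition.transpose z3 z4"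
proof -
  let ?w = "G2@G1@G1"
  have "good ?w" using ev_G12 unfolding good_def by (auto simp: zimg_simps ZZ_def)
  moreover have "induced ZZ (run ?w) = Transposition.transpose z3 z4"
    by (auto simp: fun_eq_iff induced_def Transposition.transpose_def ZZ_def zimg_simps zdist)
  ultimately show ?thesis by blast
qed

lemma all_tr:
  assumes "a \<in> ZZ" "b \<in> ZZ" "a \<noteq> b"
  shows "\<exists>w. good w \<and> induced ZZ (run w) = Transposition.transpose a b"
proof -
  have A: "a = z0 \<or> a = z1 \<or> a = z2 \<or> a = z3 \<or> a = z4" using assms(1) unfolding ZZ_def by blast
  have B: "b = z0 \<or> b = z1 \<or> b = z2 \<or> b = z3 \<or> b = z4" using assms(2) unfolding ZZ_def by blast
  note T = tr_0_1 tr_0_2 tr_0_3 tr_0_4 tr_1_2 tr_1_3 tr_1_4 tr_2_3 tr_2_4 tr_3_4 tr_sym[OF tr_0_1] tr_sym[OF tr_0_2] tr_sym[OF tr_0_3] tr_sym[OF tr_0_4] tr_sym[OF tr_1_2] tr_sym[OF tr_1_3] tr_sym[OF tr_1_4] tr_sym[OF tr_2_3] tr_sym[OF tr_2_4] tr_sym[OF tr_3_4]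
  show ?thesis using A B assms(3)
    by (elim disjE) (simp_all only: T simp_thms)
qed

lemma finZZ: "finite ZZ" unfolding ZZ_def by simp

lemma all_perm:
  assumes "p permutes ZZ"
  shows "\<exists>w. good w \<and> induced ZZ (run w) = p"
  using assms finZZ
proof (induction rule: permutes_induct)
  case id
  then show ?case using id_word by blast
next
  case (swap a b p)
  obtain w where w: "good w" "induced ZZ (run w) = p" using swap.IH by blast
  obtain t where t: "good t" "induced ZZ (run t) = Transposition.transpose a b"
    using all_tr swap.hyps by blast
  have "good (w @ t)" using w t good_append by blast
  moreover have "induced ZZ (run (w @ t)) = Transposition.transpose a b \<circ> p"
    using w t unfolding run_append_fun
    by (subst induced_comp) (auto simp: good_def)
  ultimately show ?case by blast
qed

lemma induced_permutes:
  assumes "g ` ZZ = ZZ"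
  shows "induced ZZ g permutes ZZ"
proof (rule bij_imp_permutes)
  have "inj_on g ZZ" using assms finZZ by (simp add: eq_card_imp_inj_on)
  then have "bij_betw g ZZ ZZ" using assms by (simp add: bij_betw_def)
  then show "bij_betw (induced ZZ g) ZZ ZZ"
    by (rule bij_betw_cong[THEN iffD1, rotated]) (simp add: induced_def)
  show "\<And>x. x \<notin> ZZ \<Longrightarrow> induced ZZ g x = x" by (simp add: induced_def)
qed

lemma perm_set: "{induced ZZ g | g. g \<in> S0 \<and> g ` ZZ = ZZ} = {p. p permutes ZZ}"
proof
  show "{induced ZZ g | g. g \<in> S0 \<and> g ` ZZ = ZZ} \<subseteq> {p. p permutes ZZ}"
    using induced_permutes by blast
  show "{p. p permutes ZZ} \<subseteq> {induced ZZ g | g. g \<in> S0 \<and> g ` ZZ = ZZ}"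
  proof
    fix p assume "p \<in> {p. p permutes ZZ}"
    then obtain w where "good w" "induced ZZ (run w) = p" using all_perm by blast
    then show "p \<in> {induced ZZ g | g. g \<in> S0 \<and> g ` ZZ = ZZ}"
      unfolding good_def using run_S0 by blast
  qed
qed

lemma ZZ_X0: "ZZ \<subseteq> X0"
proof -
  have e: "z0 \<in> X0" unfolding z0_def by (rule reachable.empty)
  have 1: "z1 \<in> X0" using run_X0[OF e ev_G12(1)] g1_0 by simp
  have 2: "z2 \<in> X0" using run_X0[OF 1 ev_G12(1)] g1_1 by simp
  have 3: "z3 \<in> X0" using run_X0[OF 2 ev_G12(1)] g1_2 by simp
  have 4: "z4 \<in> X0" using run_X0[OF 3 ev_G12(1)] g1_3 by simp
  show ?thesis unfolding ZZ_def using e 1 2 3 4 by simp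
qed

theorem mainTheorem1:
  shows "\<exists>Z. Z \<subseteq> X0 \<and> card Z = 5 \<and> {} \<in> Z \<and>
    (\<exists>g1\<in>S0. \<exists>g2\<in>S0. g1 ` Z = Z \<and> g2 ` Z = Z \<and>
       (\<exists>z0 z1 z2 z3 z4. distinct [z0, z1, z2, z3, z4] \<and> Z = {z0, z1, z2, z3, z4} \<and>
          g1 z0 = z1 \<and> g1 z1 = z2 \<and> g1 z2 = z3 \<and> g1 z3 = z4 \<and> g1 z4 = z0) \<and>
       (\<exists>a b c d f. distinct [a, b, c, d, f] \<and> Z = {a, b, c, d, f} \<and> a = {} \<and>
          g2 a = b \<and> g2 b = c \<and> g2 c = a \<and> g2 d = f \<and> g2 f = d)) \<and>
    {induced Z g | g. g \<in> S0 \<and> g ` Z = Z} = {p. p permutes Z} \<and>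
    {p. p permutes Z \<and> evenperm p} \<subseteq> {induced Z g | g. g \<in> S0 \<and> g ` Z = Z}"
proof (intro exI[of _ ZZ] conjI)
  show "ZZ \<subseteq> X0" by (rule ZZ_X0)
  have d: "distinct [z0, z1, z2, z3, z4]" using zdist by simp
  have "card (set [z0, z1, z2, z3, z4]) = 5" using distinct_card[OF d] by simp
  then show "card ZZ = 5" unfolding ZZ_def by simp
  show "{} \<in> ZZ" unfolding ZZ_def z0_def by simp
  have s1: "run G1 \<in> S0" "run G2 \<in> S0" using run_S0 ev_G12 by auto
  show "\<exists>g1\<in>S0. \<exists>g2\<in>S0. g1 ` ZZ = ZZ \<and> g2 ` ZZ = ZZ \<and>
       (\<exists>z0 z1 z2 z3 z4. distinct [z0, z1, z2, z3, z4] \<and> ZZ = {z0, z1, z2, z3, z4} \<and>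
          g1 z0 = z1 \<and> g1 z1 = z2 \<and> g1 z2 = z3 \<and> g1 z3 = z4 \<and> g1 z4 = z0) \<and>
       (\<exists>a b c d f. distinct [a, b, c, d, f] \<and> ZZ = {a, b, c, d, f} \<and> a = {} \<and>
          g2 a = b \<and> g2 b = c \<and> g2 c = a \<and> g2 d = f \<and> g2 f = d)"
  proof (rule bexI[OF _ s1(1)], rule bexI[OF _ s1(2)], intro conjI)
    show "run G1 ` ZZ = ZZ" unfolding ZZ_def by (simp only: image_insert image_empty g1_0 g1_1 g1_2 g1_3 g1_4) blast
    show "run G2 ` ZZ = ZZ" unfolding ZZ_def by (simp only: image_insert image_empty g2_0 g2_1 g2_2 g2_3 g2_4) blast
    show "\<exists>y0 y1 y2 y3 y4. distinct [y0, y1, y2, y3, y4] \<and> ZZ = {y0, y1, y2, y3, y4} \<and>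
          run G1 y0 = y1 \<and> run G1 y1 = y2 \<and> run G1 y2 = y3 \<and> run G1 y3 = y4 \<and> run G1 y4 = y0"
      by (rule exI[of _ z0], rule exI[of _ z1], rule exI[of _ z2], rule exI[of _ z3], rule exI[of _ z4], intro conjI)
        (simp_all only: d ZZ_def g1_0 g1_1 g1_2 g1_3 g1_4)
    show "\<exists>a b c d f. distinct [a, b, c, d, f] \<and> ZZ = {a, b, c, d, f} \<and> a = {} \<and>
          run G2 a = b \<and> run G2 b = c \<and> run G2 c = a \<and> run G2 d = f \<and> run G2 f = d"
    proof (rule exI[of _ z0], rule exI[of _ z3], rule exI[of _ z2], rule exI[of _ z1], rule exI[of _ z4], intro conjI)
      show "distinct [z0, z3, z2, z1, z4]" using zdist' by simp
      show "ZZ = {z0, z3, z2, z1, z4}" unfolding ZZ_def by (simp only: insert_commute)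
      show "z0 = {}" by (simp add: z0_def)
    qed (simp_all only: g2_0 g2_1 g2_2 g2_3 g2_4)
  qed
  show "{induced ZZ g | g. g \<in> S0 \<and> g ` ZZ = ZZ} = {p. p permutes ZZ}" by (rule perm_set)
  show "{p. p permutes ZZ \<and> evenperm p} \<subseteq> {induced ZZ g | g. g \<in> S0 \<and> g ` ZZ = ZZ}"
    using perm_set by blast
qed

end
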